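(* Let $\chi_i:\Sigma\to\Sigma_i$ ($i\in\{0,1\}$) be signature morphisms and $\{\chi'_i:\Sigma_i\to\Sigma'\}_{i\in\{0,1\}}$ a pushout (colimit) of $\chi_0,\chi_1$ in the category of signatures. Let $\mathfrak{A}_i$ be a $\mathsf{TA}_k$ $\Sigma_i$-model for $i\in\{0,1\}$. Then the following are equivalent: (a) $\mathfrak{A}_0\upharpoonright_{\chi_0}=\mathfrak{A}_1\upharpoonright_{\chi_1}$; (b) there is a $\mathsf{TA}_k$ $\Sigma'$-model $\mathfrak{A}'$ with $\mathfrak{A}'\upharpoonright_{\chi'_0}=\mathfrak{A}_0$ and $\mathfrak{A}'\upharpoonright_{\chi'_1}=\mathfrak{A}_1$.
   Context: A signature $\Sigma=(S,F,L)$ consists of a set $S$ of sorts, a family $F=(F_{w\to s})_{w\in S^*,s\in S}$ of function symbols and a family $L=(L_s)_{s\in S}$ of labels, all pairwise disjoint; a signature morphism maps sorts, function symbols (respecting arities) and labels ($L_s\to L'_{\chi(s)}$); pushouts are computed componentwise. A $\mathsf{TA}_k$ $\Sigma$-model $\mathfrak{A}$ is an $(S,F)$-algebra with a relation $\lambda^{\mathfrak{A}}\subseteq\mathfrak{A}_s\times\mathfrak{A}_s$ for each $\lambda\in L_s$, together with, for each $s\in S$, a set $\mathfrak{A}_{ss}$ of binary relations on $\mathfrak{A}_s$ that contains $\emptyset$, the identity and all $\lambda^{\mathfrak{A}}$ ($\lambda\in L_s$) and is closed under union, $(r,r')\mapsto r^c\cup r'$, composition and $(r,r')\mapsto r^{-1};r'$,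 and an operation $*_s:\mathfrak{A}_{ss}\to\mathfrak{A}_{ss}$ such that $(\mathfrak{A}_{ss};\emptyset,\cup,\mathrm{id},;,*_s)$ is a Kleene algebra. For $\chi:\Sigma\to\Sigma'$ and a $\Sigma'$-model $\mathfrak{A}'$, the reduct $\mathfrak{A}'\upharpoonright_\chi$ is the $\Sigma$-model with carriers $\mathfrak{A}'_{\chi(s)}$, $\sigma^{\mathfrak{A}'\upharpoonright_\chi}=\chi(\sigma)^{\mathfrak{A}'}$, $\lambda^{\mathfrak{A}'\upharpoonright_\chi}=\chi(\lambda)^{\mathfrak{A}'}$, relation sets $\mathfrak{A}'_{\chi(s)\chi(s)}$ and operations $*_{\chi(s)}$. *)

theory Defs
  imports Main
begin

text \<open>Sorts, function symbols and labels live in three separate types, so they are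
pairwise disjoint. Each function symbol carries its arity (w, s), i.e. the family
F_{w->s} is represented by the set of symbols with arity (w,s); each label carries
its sort, i.e. L_s is the set of labels with sort s.\<close>

record ('s, 'f, 'l) sig =
  sorts  :: "'s set"
  ops    :: "'f set"
  arity  :: "'f \<Rightarrow> 's list \<times> 's"
  labels :: "'l set"
  lsort  :: "'l \<Rightarrow> 's"

definition wf_sig :: "('s, 'f, 'l) sig \<Rightarrow> bool" where
  "wf_sig Sg \<longleftrightarrow>
     (\<forall>f\<in>ops Sg. set (fst (arity Sg f)) \<subseteq> sorts Sg \<and> snd (arity Sg f) \<in> sorts Sg) \<and>
     (\<forall>l\<in>labels Sg. lsort Sg l \<in> sorts Sg)"

record ('s1, 'f1, 'l1, 's2, 'f2, 'l2) morph =
  smap :: "'s1 \<Rightarrow> 's2"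
  fmap :: "'f1 \<Rightarrow> 'f2"
  lmap :: "'l1 \<Rightarrow> 'l2"

definition is_morph ::
  "('s1, 'f1, 'l1) sig \<Rightarrow> ('s2, 'f2, 'l2) sig \<Rightarrow> ('s1, 'f1, 'l1, 's2, 'f2, 'l2) morph \<Rightarrow> bool" where
  "is_morph Sg Sg' chi \<longleftrightarrow> wf_sig Sg \<and> wf_sig Sg' \<and>
     (\<forall>s\<in>sorts Sg. smap chi s \<in> sorts Sg') \<and>
     (\<forall>f\<in>ops Sg. fmap chi f \<in> ops Sg' \<and>
        arity Sg' (fmap chi f) = (map (smap chi) (fst (arity Sg f)), smap chi (snd (arity Sg f)))) \<and>
     (\<forall>l\<in>labels Sg. lmap chi l \<in> labels Sg' \<and> lsort Sg' (lmap chi l) = smap chi (lsort Sg l))"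

definition morph_comp ::
  "('s2, 'f2, 'l2, 's3, 'f3, 'l3) morph \<Rightarrow> ('s1, 'f1, 'l1, 's2, 'f2, 'l2) morph
   \<Rightarrow> ('s1, 'f1, 'l1, 's3, 'f3, 'l3) morph" where
  "morph_comp th chi = \<lparr>smap = smap th \<circ> smap chi, fmap = fmap th \<circ> fmap chi,
                         lmap = lmap th \<circ> lmap chi\<rparr>"

definition morph_eq_on ::
  "('s1, 'f1, 'l1) sig \<Rightarrow> ('s1, 'f1, 'l1, 's2, 'f2, 'l2) morph \<Rightarrow> ('s1, 'f1, 'l1, 's2, 'f2, 'l2) morph \<Rightarrow> bool" where
  "morph_eq_on Sg chi th \<longleftrightarrow>
     (\<forall>s\<in>sorts Sg. smap chi s = smap th s) \<and>
     (\<forall>f\<in>ops Sg. fmap chi f = fmap th f) \<and>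
     (\<forall>l\<in>labels Sg. lmap chi l = lmap th l)"

text \<open>The universal property is
tested against all signatures whose sorts/symbols/labels live in the types
('s0+'s1) set, ('f0+'f1) set, ('l0+'l1) set, which are large enough to contain the
canonical (componentwise) pushout; hence this is equivalent to being a pushout in the
category of all signatures.\<close>
definition is_pushout ::
  "('s, 'f, 'l) sig \<Rightarrow> ('s0, 'f0, 'l0) sig \<Rightarrow> ('s1, 'f1, 'l1) sig \<Rightarrow> ('s2, 'f2, 'l2) sig
   \<Rightarrow> ('s, 'f, 'l, 's0, 'f0, 'l0) morph \<Rightarrow> ('s, 'f, 'l, 's1, 'f1, 'l1) morph
   \<Rightarrow> ('s0, 'f0, 'l0, 's2, 'f2, 'l2) morph \<Rightarrow> ('s1, 'f1, 'l1, 's2, 'f2, 'l2) morph \<Rightarrow> bool" where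
  "is_pushout Sg Sg0 Sg1 Sg' chi0 chi1 chi0' chi1' \<longleftrightarrow>
     is_morph Sg Sg0 chi0 \<and> is_morph Sg Sg1 chi1 \<and>
     is_morph Sg0 Sg' chi0' \<and> is_morph Sg1 Sg' chi1' \<and>
     morph_eq_on Sg (morph_comp chi0' chi0) (morph_comp chi1' chi1) \<and>
     (\<forall>(Sg'' :: (('s0 + 's1) set, ('f0 + 'f1) set, ('l0 + 'l1) set) sig) th0 th1.
        is_morph Sg0 Sg'' th0 \<and> is_morph Sg1 Sg'' th1 \<and>
        morph_eq_on Sg (morph_comp th0 chi0) (morph_comp th1 chi1) \<longrightarrow>
        (\<exists>th. is_morph Sg' Sg'' th \<and>
              morph_eq_on Sg0 (morph_comp th chi0') th0 \<and>
              morph_eq_on Sg1 (morph_comp th chi1') th1 \<and>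
              (\<forall>th'. is_morph Sg' Sg'' th' \<and>
                     morph_eq_on Sg0 (morph_comp th' chi0') th0 \<and>
                     morph_eq_on Sg1 (morph_comp th' chi1') th1 \<longrightarrow>
                     morph_eq_on Sg' th th')))"

definition kleene_algebra_on ::
  "'a set \<Rightarrow> 'a \<Rightarrow> ('a \<Rightarrow> 'a \<Rightarrow> 'a) \<Rightarrow> 'a \<Rightarrow> ('a \<Rightarrow> 'a \<Rightarrow> 'a) \<Rightarrow> ('a \<Rightarrow> 'a) \<Rightarrow> bool" where
  "kleene_algebra_on K ze pl on tm star \<longleftrightarrow>
     ze \<in> K \<and> on \<in> K \<and>
     (\<forall>a\<in>K. \<forall>b\<in>K. pl a b \<in> K \<and> tm a b \<in> K) \<and>
     (\<forall>a\<in>K. star a \<in> K) \<and>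
     (\<forall>a\<in>K. \<forall>b\<in>K. \<forall>c\<in>K.
        pl (pl a b) c = pl a (pl b c) \<and>
        pl a b = pl b a \<and>
        pl a ze = a \<and>
        pl a a = a \<and>
        tm (tm a b) c = tm a (tm b c) \<and>
        tm on a = a \<and> tm a on = a \<and>
        tm a (pl b c) = pl (tm a b) (tm a c) \<and>
        tm (pl a b) c = pl (tm a c) (tm b c) \<and>
        tm ze a = ze \<and> tm a ze = ze) \<and>
     (\<forall>a\<in>K.
        pl (pl on (tm a (star a))) (star a) = star a \<and>
        pl (pl on (tm (star a) a)) (star a) = star a) \<and>
     (\<forall>a\<in>K. \<forall>b\<in>K. \<forall>x\<in>K.
        (pl (pl b (tm a x)) x = x \<longrightarrow> pl (tm (star a) b) x = x) \<and>
        (pl (pl b (tm x a)) x = x \<longrightarrow> pl (tm b (star a)) x = x))"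

text \<open>Models are normalised outside the signature (empty carriers / relation sets,
undefined operations), so that equality of models is HOL equality.\<close>

record ('s, 'f, 'l, 'u) model =
  car   :: "'s \<Rightarrow> 'u set"
  opi   :: "'f \<Rightarrow> 'u list \<Rightarrow> 'u"
  lrel  :: "'l \<Rightarrow> ('u \<times> 'u) set"
  rels  :: "'s \<Rightarrow> ('u \<times> 'u) set set"
  kstar :: "'s \<Rightarrow> ('u \<times> 'u) set \<Rightarrow> ('u \<times> 'u) set"

definition is_model :: "('s, 'f, 'l) sig \<Rightarrow> ('s, 'f, 'l, 'u) model \<Rightarrow> bool" where
  "is_model Sg A \<longleftrightarrow> wf_sig Sg \<and>
     (\<forall>s. s \<notin> sorts Sg \<longrightarrow> car A s = {} \<and> rels A s = {} \<and> kstar A s = (\<lambda>r. undefined)) \<and>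
     (\<forall>f xs. \<not> (f \<in> ops Sg \<and> list_all2 (\<lambda>x s. x \<in> car A s) xs (fst (arity Sg f)))
             \<longrightarrow> opi A f xs = undefined) \<and>
     (\<forall>f\<in>ops Sg. \<forall>xs. list_all2 (\<lambda>x s. x \<in> car A s) xs (fst (arity Sg f))
             \<longrightarrow> opi A f xs \<in> car A (snd (arity Sg f))) \<and>
     (\<forall>l. l \<notin> labels Sg \<longrightarrow> lrel A l = {}) \<and>
     (\<forall>l\<in>labels Sg. lrel A l \<subseteq> car A (lsort Sg l) \<times> car A (lsort Sg l)) \<and>
     (\<forall>s\<in>sorts Sg.
        rels A s \<subseteq> Pow (car A s \<times> car A s) \<and>
        {} \<in> rels A s \<and> Id_on (car A s) \<in> rels A s \<and>
        (\<forall>l\<in>labels Sg. lsort Sg l = s \<longrightarrow> lrel A l \<in> rels A s) \<and>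
        (\<forall>r\<in>rels A s. \<forall>r'\<in>rels A s.
           r \<union> r' \<in> rels A s \<and>
           ((car A s \<times> car A s) - r) \<union> r' \<in> rels A s \<and>
           r O r' \<in> rels A s \<and>
           (converse r) O r' \<in> rels A s) \<and>
        kleene_algebra_on (rels A s) {} (\<union>) (Id_on (car A s)) (O) (kstar A s) \<and>
        (\<forall>r. r \<notin> rels A s \<longrightarrow> kstar A s r = undefined))"

definition reduct ::
  "('s1, 'f1, 'l1) sig \<Rightarrow> ('s1, 'f1, 'l1, 's2, 'f2, 'l2) morph \<Rightarrow> ('s2, 'f2, 'l2, 'u) model
   \<Rightarrow> ('s1, 'f1, 'l1, 'u) model" where
  "reduct Sg chi A' =
     \<lparr> car = (\<lambda>s. if s \<in> sorts Sg then car A' (smap chi s) else {}),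
       opi = (\<lambda>f xs. if f \<in> ops Sg \<and> list_all2 (\<lambda>x s. x \<in> car A' (smap chi s)) xs (fst (arity Sg f))
                      then opi A' (fmap chi f) xs else undefined),
       lrel = (\<lambda>l. if l \<in> labels Sg then lrel A' (lmap chi l) else {}),
       rels = (\<lambda>s. if s \<in> sorts Sg then rels A' (smap chi s) else {}),
       kstar = (\<lambda>s r. if s \<in> sorts Sg \<and> r \<in> rels A' (smap chi s)
                      then kstar A' (smap chi s) r else undefined) \<rparr>"

end

theory Submission imports Defs begin

lemma list_all2_cong_set:
  assumes "\<And>x y. y \<in> set ys \<Longrightarrow> P x y = Q x y"
  shows "list_all2 P xs ys = list_all2 Q xs ys"
  using assms by (induction xs arbitrary: ys) (auto simp: list_all2_Cons1)

lemma reduct_cong: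
  assumes "morph_eq_on Sg chi th" "wf_sig Sg"
  shows "reduct Sg chi A = reduct Sg th A"
proof -
  have ar: "\<And>f s. f \<in> ops Sg \<Longrightarrow> s \<in> set (fst (arity Sg f)) \<Longrightarrow> s \<in> sorts Sg"
    using assms(2) unfolding wf_sig_def by blast
  have l2: "\<And>f xs. f \<in> ops Sg \<Longrightarrow> list_all2 (\<lambda>x s. x \<in> car A (smap chi s)) xs (fst (arity Sg f))
     = list_all2 (\<lambda>x s. x \<in> car A (smap th s)) xs (fst (arity Sg f))"
    by (rule list_all2_cong_set) (use assms(1) ar in \<open>auto simp: morph_eq_on_def\<close>)
  show ?thesis using assms(1) l2 unfolding reduct_def morph_eq_on_def
    by (auto simp: fun_eq_iff)
qed

lemma reduct_comp:
  assumes "is_morph Sg Sg0 chi" "is_morph Sg0 Sg' chi'"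
  shows "reduct Sg chi (reduct Sg0 chi' A') = reduct Sg (morph_comp chi' chi) A'"
proof -
  have wf: "wf_sig Sg" using assms(1) by (simp add: is_morph_def)
  have ar: "\<And>f s. f \<in> ops Sg \<Longrightarrow> s \<in> set (fst (arity Sg f)) \<Longrightarrow> s \<in> sorts Sg"
    using wf unfolding wf_sig_def by blast
  have sm: "\<And>s. s \<in> sorts Sg \<Longrightarrow> smap chi s \<in> sorts Sg0" and
       fm: "\<And>f. f \<in> ops Sg \<Longrightarrow> fmap chi f \<in> ops Sg0 \<and>
        arity Sg0 (fmap chi f) = (map (smap chi) (fst (arity Sg f)), smap chi (snd (arity Sg f)))"
    and lm: "\<And>l. l \<in> labels Sg \<Longrightarrow> lmap chi l \<in> labels Sg0"
    using assms(1) by (auto simp: is_morph_def)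
  have l2: "\<And>f xs. f \<in> ops Sg \<Longrightarrow>
     list_all2 (\<lambda>x s. x \<in> (if s \<in> sorts Sg0 then car A' (smap chi' s) else {})) xs (fst (arity Sg0 (fmap chi f)))
     = list_all2 (\<lambda>x s. x \<in> car A' (smap chi' (smap chi s))) xs (fst (arity Sg f))"
    by (simp add: fm list_all2_map2, rule list_all2_cong_set) (use ar sm in auto)
  have l3: "\<And>f xs. f \<in> ops Sg \<Longrightarrow>
     list_all2 (\<lambda>x s. x \<in> (if smap chi s \<in> sorts Sg0 then car A' (smap chi' (smap chi s)) else {})) xs (fst (arity Sg f))
     = list_all2 (\<lambda>x s. x \<in> car A' (smap chi' (smap chi s))) xs (fst (arity Sg f))"
    by (rule list_all2_cong_set) (use ar sm in auto)
  show ?thesis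
    unfolding reduct_def morph_comp_def using sm fm lm l2 l3
    by (auto simp: fun_eq_iff list_all2_map2)
qed


locale po_setup =
  fixes Sg :: "('s, 'f, 'l) sig"
    and Sg0 :: "('s0, 'f0, 'l0) sig" and Sg1 :: "('s1, 'f1, 'l1) sig"
    and Sg' :: "('s2, 'f2, 'l2) sig"
    and chi0 :: "('s, 'f, 'l, 's0, 'f0, 'l0) morph"
    and chi1 :: "('s, 'f, 'l, 's1, 'f1, 'l1) morph"
    and chi0' :: "('s0, 'f0, 'l0, 's2, 'f2, 'l2) morph"
    and chi1' :: "('s1, 'f1, 'l1, 's2, 'f2, 'l2) morph"
    and A0 :: "('s0, 'f0, 'l0, 'u) model"
    and A1 :: "('s1, 'f1, 'l1, 'u) model"
  assumes po: "is_pushout Sg Sg0 Sg1 Sg' chi0 chi1 chi0' chi1'"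
    and m0: "is_model Sg0 A0"
    and m1: "is_model Sg1 A1"
    and eq: "reduct Sg chi0 A0 = reduct Sg chi1 A1"
begin

lemma mor: "is_morph Sg Sg0 chi0" "is_morph Sg Sg1 chi1" "is_morph Sg0 Sg' chi0'" "is_morph Sg1 Sg' chi1'"
  using po by (auto simp: is_pushout_def)

lemma wf: "wf_sig Sg" "wf_sig Sg0" "wf_sig Sg1" "wf_sig Sg'"
  using mor by (auto simp: is_morph_def)

lemma arS: "f \<in> ops Sg \<Longrightarrow> s \<in> set (fst (arity Sg f)) \<Longrightarrow> s \<in> sorts Sg"
  "f \<in> ops Sg \<Longrightarrow> snd (arity Sg f) \<in> sorts Sg"
  "l \<in> labels Sg \<Longrightarrow> lsort Sg l \<in> sorts Sg"
  using wf(1) unfolding wf_sig_def by blast+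
lemma arS0: "f \<in> ops Sg0 \<Longrightarrow> s \<in> set (fst (arity Sg0 f)) \<Longrightarrow> s \<in> sorts Sg0"
  "f \<in> ops Sg0 \<Longrightarrow> snd (arity Sg0 f) \<in> sorts Sg0"
  "l \<in> labels Sg0 \<Longrightarrow> lsort Sg0 l \<in> sorts Sg0"
  using wf(2) unfolding wf_sig_def by blast+
lemma arS1: "f \<in> ops Sg1 \<Longrightarrow> s \<in> set (fst (arity Sg1 f)) \<Longrightarrow> s \<in> sorts Sg1"
  "f \<in> ops Sg1 \<Longrightarrow> snd (arity Sg1 f) \<in> sorts Sg1"
  "l \<in> labels Sg1 \<Longrightarrow> lsort Sg1 l \<in> sorts Sg1"
  using wf(3) unfolding wf_sig_def by blast+
lemma arS': "f \<in> ops Sg' \<Longrightarrow> s \<in> set (fst (arity Sg' f)) \<Longrightarrow> s \<in> sorts Sg'"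
  "f \<in> ops Sg' \<Longrightarrow> snd (arity Sg' f) \<in> sorts Sg'"
  "l \<in> labels Sg' \<Longrightarrow> lsort Sg' l \<in> sorts Sg'"
  using wf(4) unfolding wf_sig_def by blast+

lemma mor0: "s \<in> sorts Sg \<Longrightarrow> smap chi0 s \<in> sorts Sg0"
  "f \<in> ops Sg \<Longrightarrow> fmap chi0 f \<in> ops Sg0"
  "f \<in> ops Sg \<Longrightarrow> arity Sg0 (fmap chi0 f) = (map (smap chi0) (fst (arity Sg f)), smap chi0 (snd (arity Sg f)))"
  "l \<in> labels Sg \<Longrightarrow> lmap chi0 l \<in> labels Sg0"
  "l \<in> labels Sg \<Longrightarrow> lsort Sg0 (lmap chi0 l) = smap chi0 (lsort Sg l)"
  using mor(1) unfolding is_morph_def by blast+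
lemma mor1: "s \<in> sorts Sg \<Longrightarrow> smap chi1 s \<in> sorts Sg1"
  "f \<in> ops Sg \<Longrightarrow> fmap chi1 f \<in> ops Sg1"
  "f \<in> ops Sg \<Longrightarrow> arity Sg1 (fmap chi1 f) = (map (smap chi1) (fst (arity Sg f)), smap chi1 (snd (arity Sg f)))"
  "l \<in> labels Sg \<Longrightarrow> lmap chi1 l \<in> labels Sg1"
  "l \<in> labels Sg \<Longrightarrow> lsort Sg1 (lmap chi1 l) = smap chi1 (lsort Sg l)"
  using mor(2) unfolding is_morph_def by blast+
lemma mor0': "s \<in> sorts Sg0 \<Longrightarrow> smap chi0' s \<in> sorts Sg'"
  "f \<in> ops Sg0 \<Longrightarrow> fmap chi0' f \<in> ops Sg'"
  "f \<in> ops Sg0 \<Longrightarrow> arity Sg' (fmap chi0' f) = (map (smap chi0') (fst (arity Sg0 f)), smap chi0' (snd (arity Sg0 f)))"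
  "l \<in> labels Sg0 \<Longrightarrow> lmap chi0' l \<in> labels Sg'"
  "l \<in> labels Sg0 \<Longrightarrow> lsort Sg' (lmap chi0' l) = smap chi0' (lsort Sg0 l)"
  using mor(3) unfolding is_morph_def by blast+
lemma mor1': "s \<in> sorts Sg1 \<Longrightarrow> smap chi1' s \<in> sorts Sg'"
  "f \<in> ops Sg1 \<Longrightarrow> fmap chi1' f \<in> ops Sg'"
  "f \<in> ops Sg1 \<Longrightarrow> arity Sg' (fmap chi1' f) = (map (smap chi1') (fst (arity Sg1 f)), smap chi1' (snd (arity Sg1 f)))"
  "l \<in> labels Sg1 \<Longrightarrow> lmap chi1' l \<in> labels Sg'"
  "l \<in> labels Sg1 \<Longrightarrow> lsort Sg' (lmap chi1' l) = smap chi1' (lsort Sg1 l)"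
  using mor(4) unfolding is_morph_def by blast+

lemma univ: "\<And>(Sg'' :: (('s0 + 's1) set, ('f0 + 'f1) set, ('l0 + 'l1) set) sig) th0 th1.
        is_morph Sg0 Sg'' th0 \<Longrightarrow> is_morph Sg1 Sg'' th1 \<Longrightarrow>
        morph_eq_on Sg (morph_comp th0 chi0) (morph_comp th1 chi1) \<Longrightarrow>
        (\<exists>th. is_morph Sg' Sg'' th \<and>
              morph_eq_on Sg0 (morph_comp th chi0') th0 \<and>
              morph_eq_on Sg1 (morph_comp th chi1') th1 \<and>
              (\<forall>th'. is_morph Sg' Sg'' th' \<and>
                     morph_eq_on Sg0 (morph_comp th' chi0') th0 \<and>
                     morph_eq_on Sg1 (morph_comp th' chi1') th1 \<longrightarrow>
                     morph_eq_on Sg' th th'))"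
  using po unfolding is_pushout_def by blast

lemma eq_car: "s \<in> sorts Sg \<Longrightarrow> car A0 (smap chi0 s) = car A1 (smap chi1 s)"
proof -
  assume s: "s \<in> sorts Sg"
  have "car (reduct Sg chi0 A0) s = car (reduct Sg chi1 A1) s" using eq by simp
  thus ?thesis using s by (simp add: reduct_def)
qed

lemma eq_rels: "s \<in> sorts Sg \<Longrightarrow> rels A0 (smap chi0 s) = rels A1 (smap chi1 s)"
proof -
  assume s: "s \<in> sorts Sg"
  have "rels (reduct Sg chi0 A0) s = rels (reduct Sg chi1 A1) s" using eq by simp
  thus ?thesis using s by (simp add: reduct_def)
qed

lemma eq_kstar: "s \<in> sorts Sg \<Longrightarrow> kstar A0 (smap chi0 s) = kstar A1 (smap chi1 s)"
proof
  fix r assume s: "s \<in> sorts Sg"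
  have e: "kstar (reduct Sg chi0 A0) s r = kstar (reduct Sg chi1 A1) s r" using eq by simp
  show "kstar A0 (smap chi0 s) r = kstar A1 (smap chi1 s) r"
  proof (cases "r \<in> rels A0 (smap chi0 s)")
    case True
    then show ?thesis using e s eq_rels[OF s] by (simp add: reduct_def)
  next
    case False
    then have "r \<notin> rels A1 (smap chi1 s)" using eq_rels[OF s] by simp
    then show ?thesis using False m0 m1 mor0(1)[OF s] mor1(1)[OF s] unfolding is_model_def by auto
  qed
qed

lemma eq_lrel: "l \<in> labels Sg \<Longrightarrow> lrel A0 (lmap chi0 l) = lrel A1 (lmap chi1 l)"
proof -
  assume s: "l \<in> labels Sg"
  have "lrel (reduct Sg chi0 A0) l = lrel (reduct Sg chi1 A1) l" using eq by simp
  thus ?thesis using s by (simp add: reduct_def)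
qed

lemma eq_opi: "g \<in> ops Sg \<Longrightarrow> opi A0 (fmap chi0 g) = opi A1 (fmap chi1 g)"
proof
  fix xs assume g: "g \<in> ops Sg"
  have e: "opi (reduct Sg chi0 A0) g xs = opi (reduct Sg chi1 A1) g xs" using eq by simp
  have c: "list_all2 (\<lambda>x s. x \<in> car A0 (smap chi0 s)) xs (fst (arity Sg g)) =
           list_all2 (\<lambda>x s. x \<in> car A1 (smap chi1 s)) xs (fst (arity Sg g))"
    by (rule list_all2_cong_set) (use eq_car arS(1)[OF g] in auto)
  show "opi A0 (fmap chi0 g) xs = opi A1 (fmap chi1 g) xs"
  proof (cases "list_all2 (\<lambda>x s. x \<in> car A0 (smap chi0 s)) xs (fst (arity Sg g))")
    case True
    then show ?thesis using e g c by (simp add: reduct_def)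
  next
    case False
    have "opi A0 (fmap chi0 g) xs = undefined" using m0 False unfolding is_model_def
      by (simp add: mor0(3)[OF g] list_all2_map2)
    moreover have "opi A1 (fmap chi1 g) xs = undefined" using m1 False c unfolding is_model_def
      by (simp add: mor1(3)[OF g] list_all2_map2)
    ultimately show ?thesis by simp
  qed
qed


section \<open>Quotient signature\<close>

definition DS :: "('s0 + 's1) set" where "DS = Inl ` sorts Sg0 \<union> Inr ` sorts Sg1"
definition DF :: "('f0 + 'f1) set" where "DF = Inl ` ops Sg0 \<union> Inr ` ops Sg1"
definition DL :: "('l0 + 'l1) set" where "DL = Inl ` labels Sg0 \<union> Inr ` labels Sg1"

definition carD :: "'s0 + 's1 \<Rightarrow> 'u set" where
  "carD x = (case x of Inl s \<Rightarrow> car A0 s | Inr s \<Rightarrow> car A1 s)"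
definition relsD :: "'s0 + 's1 \<Rightarrow> ('u \<times> 'u) set set" where
  "relsD x = (case x of Inl s \<Rightarrow> rels A0 s | Inr s \<Rightarrow> rels A1 s)"
definition kstarD :: "'s0 + 's1 \<Rightarrow> ('u \<times> 'u) set \<Rightarrow> ('u \<times> 'u) set" where
  "kstarD x = (case x of Inl s \<Rightarrow> kstar A0 s | Inr s \<Rightarrow> kstar A1 s)"
definition dS where "dS x = (carD x, relsD x, kstarD x)"
definition cS :: "'s0 + 's1 \<Rightarrow> ('s0 + 's1) set" where "cS x = {y \<in> DS. dS y = dS x}"

definition opD :: "'f0 + 'f1 \<Rightarrow> 'u list \<Rightarrow> 'u" where
  "opD x = (case x of Inl f \<Rightarrow> opi A0 f | Inr f \<Rightarrow> opi A1 f)"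
definition arF :: "'f0 + 'f1 \<Rightarrow> ('s0 + 's1) set list \<times> ('s0 + 's1) set" where
  "arF x = (case x of Inl f \<Rightarrow> (map (cS \<circ> Inl) (fst (arity Sg0 f)), cS (Inl (snd (arity Sg0 f))))
                    | Inr f \<Rightarrow> (map (cS \<circ> Inr) (fst (arity Sg1 f)), cS (Inr (snd (arity Sg1 f)))))"
definition cF :: "'f0 + 'f1 \<Rightarrow> ('f0 + 'f1) set" where
  "cF x = {y \<in> DF. opD y = opD x \<and> arF y = arF x}"

definition lrD :: "'l0 + 'l1 \<Rightarrow> ('u \<times> 'u) set" where
  "lrD x = (case x of Inl l \<Rightarrow> lrel A0 l | Inr l \<Rightarrow> lrel A1 l)"
definition lsD :: "'l0 + 'l1 \<Rightarrow> 's0 + 's1" where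
  "lsD x = (case x of Inl l \<Rightarrow> Inl (lsort Sg0 l) | Inr l \<Rightarrow> Inr (lsort Sg1 l))"
definition cL :: "'l0 + 'l1 \<Rightarrow> ('l0 + 'l1) set" where
  "cL x = {y \<in> DL. lrD y = lrD x \<and> cS (lsD y) = cS (lsD x)}"

definition PS :: "bool \<Rightarrow> ('s0 + 's1) set list \<times> ('s0 + 's1) set \<Rightarrow>
   (('s0 + 's1) set, ('f0 + 'f1) set, ('l0 + 'l1) set) sig" where
  "PS J a = \<lparr>sorts = cS ` DS, ops = cF ` DF \<union> (if J then {{}} else {}),
     arity = (\<lambda>c. if c = {} then a else arF (SOME x. x \<in> c)),
     labels = cL ` DL, lsort = (\<lambda>c. cS (lsD (SOME x. x \<in> c)))\<rparr>"

definition th0 where "th0 = \<lparr>smap = cS \<circ> Inl, fmap = cF \<circ> Inl, lmap = cL \<circ> Inl\<rparr>"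
definition th1 where "th1 = \<lparr>smap = cS \<circ> Inr, fmap = cF \<circ> Inr, lmap = cL \<circ> Inr\<rparr>"

lemma cF_ne: "x \<in> DF \<Longrightarrow> x \<in> cF x" by (simp add: cF_def)
lemma cS_ne: "x \<in> DS \<Longrightarrow> x \<in> cS x" by (simp add: cS_def)
lemma cL_ne: "x \<in> DL \<Longrightarrow> x \<in> cL x" by (simp add: cL_def)

lemma arity_PS: "x \<in> DF \<Longrightarrow> arity (PS J a) (cF x) = arF x"
proof -
  assume x: "x \<in> DF"
  hence ne: "cF x \<noteq> {}" using cF_ne by blast
  have "(SOME y. y \<in> cF x) \<in> cF x" using cF_ne[OF x] by (rule someI)
  hence "arF (SOME y. y \<in> cF x) = arF x" by (simp add: cF_def)
  thus ?thesis using ne by (simp add: PS_def)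
qed

lemma lsort_PS: "x \<in> DL \<Longrightarrow> lsort (PS J a) (cL x) = cS (lsD x)"
proof -
  assume x: "x \<in> DL"
  have "(SOME y. y \<in> cL x) \<in> cL x" using cL_ne[OF x] by (rule someI)
  hence "cS (lsD (SOME y. y \<in> cL x)) = cS (lsD x)" by (simp add: cL_def)
  thus ?thesis by (simp add: PS_def)
qed

lemma arF_sorts: "x \<in> DF \<Longrightarrow> set (fst (arF x)) \<subseteq> cS ` DS \<and> snd (arF x) \<in> cS ` DS"
  unfolding DF_def DS_def arF_def using arS0 arS1 by fastforce

lemma lsD_sorts: "x \<in> DL \<Longrightarrow> lsD x \<in> DS"
  unfolding DL_def DS_def lsD_def using arS0 arS1 by fastforce

lemma wf_PS: "(J \<Longrightarrow> set (fst a) \<subseteq> cS ` DS \<and> snd a \<in> cS ` DS) \<Longrightarrow> wf_sig (PS J a)"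
proof -
  assume j: "J \<Longrightarrow> set (fst a) \<subseteq> cS ` DS \<and> snd a \<in> cS ` DS"
  have 1: "\<forall>f\<in>ops (PS J a). set (fst (arity (PS J a) f)) \<subseteq> sorts (PS J a) \<and> snd (arity (PS J a) f) \<in> sorts (PS J a)"
  proof
    fix f assume f: "f \<in> ops (PS J a)"
    show "set (fst (arity (PS J a) f)) \<subseteq> sorts (PS J a) \<and> snd (arity (PS J a) f) \<in> sorts (PS J a)"
    proof (cases "f \<in> cF ` DF")
      case True
      then obtain x where x: "x \<in> DF" "f = cF x" by blast
      then show ?thesis using arity_PS[OF x(1)] arF_sorts[OF x(1)] by (simp add: PS_def)
    next
      case False
      then have "J" "f = {}" using f by (auto simp: PS_def split: if_splits)
      then show ?thesis using j by (simp add: PS_def)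
    qed
  qed
  have 2: "\<forall>l\<in>labels (PS J a). lsort (PS J a) l \<in> sorts (PS J a)"
  proof
    fix l assume "l \<in> labels (PS J a)"
    then obtain x where x: "x \<in> DL" "l = cL x" by (auto simp: PS_def)
    show "lsort (PS J a) l \<in> sorts (PS J a)" using lsort_PS[OF x(1)] lsD_sorts[OF x(1)] x
      by (simp add: PS_def)
  qed
  show ?thesis using 1 2 unfolding wf_sig_def by blast
qed

lemma morph_th0: "(J \<Longrightarrow> set (fst a) \<subseteq> cS ` DS \<and> snd a \<in> cS ` DS) \<Longrightarrow> is_morph Sg0 (PS J a) th0"
proof -
  assume j: "J \<Longrightarrow> set (fst a) \<subseteq> cS ` DS \<and> snd a \<in> cS ` DS"
  have F: "\<And>f. f \<in> ops Sg0 \<Longrightarrow> Inl f \<in> DF" by (simp add: DF_def)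
  have L: "\<And>l. l \<in> labels Sg0 \<Longrightarrow> Inl l \<in> DL" by (simp add: DL_def)
  show ?thesis unfolding is_morph_def
    using wf(2) wf_PS[OF j] arity_PS[OF F] lsort_PS[OF L]
    by (auto simp: th0_def PS_def DS_def DF_def DL_def arF_def lsD_def)
qed

lemma morph_th1: "(J \<Longrightarrow> set (fst a) \<subseteq> cS ` DS \<and> snd a \<in> cS ` DS) \<Longrightarrow> is_morph Sg1 (PS J a) th1"
proof -
  assume j: "J \<Longrightarrow> set (fst a) \<subseteq> cS ` DS \<and> snd a \<in> cS ` DS"
  have F: "\<And>f. f \<in> ops Sg1 \<Longrightarrow> Inr f \<in> DF" by (simp add: DF_def)
  have L: "\<And>l. l \<in> labels Sg1 \<Longrightarrow> Inr l \<in> DL" by (simp add: DL_def)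
  show ?thesis unfolding is_morph_def
    using wf(3) wf_PS[OF j] arity_PS[OF F] lsort_PS[OF L]
    by (auto simp: th1_def PS_def DS_def DF_def DL_def arF_def lsD_def)
qed

lemma cS_eq: "s \<in> sorts Sg \<Longrightarrow> cS (Inl (smap chi0 s)) = cS (Inr (smap chi1 s))"
  using eq_car eq_rels eq_kstar by (simp add: cS_def dS_def carD_def relsD_def kstarD_def)

lemma comm: "morph_eq_on Sg (morph_comp th0 chi0) (morph_comp th1 chi1)"
proof -
  have "\<And>g. g \<in> ops Sg \<Longrightarrow> arF (Inl (fmap chi0 g)) = arF (Inr (fmap chi1 g))"
    using cS_eq arS by (auto simp: arF_def mor0(3) mor1(3))
  hence F: "\<And>g. g \<in> ops Sg \<Longrightarrow> cF (Inl (fmap chi0 g)) = cF (Inr (fmap chi1 g))"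
    using eq_opi by (simp add: cF_def opD_def)
  have L: "\<And>l. l \<in> labels Sg \<Longrightarrow> cL (Inl (lmap chi0 l)) = cL (Inr (lmap chi1 l))"
    using eq_lrel cS_eq arS(3) by (simp add: cL_def lrD_def lsD_def mor0(5) mor1(5))
  show ?thesis using cS_eq F L by (simp add: morph_eq_on_def morph_comp_def th0_def th1_def)
qed


section \<open>Mediating morphism and kernel\<close>

abbreviation "P0 \<equiv> PS False undefined"

definition theta where "theta = (SOME th. is_morph Sg' P0 th \<and>
   morph_eq_on Sg0 (morph_comp th chi0') th0 \<and> morph_eq_on Sg1 (morph_comp th chi1') th1)"

lemma theta: "is_morph Sg' P0 theta" "morph_eq_on Sg0 (morph_comp theta chi0') th0"
   "morph_eq_on Sg1 (morph_comp theta chi1') th1"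
proof -
  have "\<exists>th. is_morph Sg' P0 th \<and>
   morph_eq_on Sg0 (morph_comp th chi0') th0 \<and> morph_eq_on Sg1 (morph_comp th chi1') th1"
    using univ[OF morph_th0[of False undefined, OF FalseE] morph_th1[of False undefined, OF FalseE] comm] by blast
  hence "is_morph Sg' P0 theta \<and>
   morph_eq_on Sg0 (morph_comp theta chi0') th0 \<and> morph_eq_on Sg1 (morph_comp theta chi1') th1"
    unfolding theta_def by (rule someI_ex)
  thus "is_morph Sg' P0 theta" "morph_eq_on Sg0 (morph_comp theta chi0') th0"
   "morph_eq_on Sg1 (morph_comp theta chi1') th1" by auto
qed

definition chiS :: "'s0 + 's1 \<Rightarrow> 's2" where
  "chiS x = (case x of Inl s \<Rightarrow> smap chi0' s | Inr s \<Rightarrow> smap chi1' s)"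
definition chiF :: "'f0 + 'f1 \<Rightarrow> 'f2" where
  "chiF x = (case x of Inl s \<Rightarrow> fmap chi0' s | Inr s \<Rightarrow> fmap chi1' s)"
definition chiL :: "'l0 + 'l1 \<Rightarrow> 'l2" where
  "chiL x = (case x of Inl s \<Rightarrow> lmap chi0' s | Inr s \<Rightarrow> lmap chi1' s)"

lemma theta_S: "x \<in> DS \<Longrightarrow> smap theta (chiS x) = cS x"
  using theta(2,3) by (auto simp: DS_def chiS_def morph_eq_on_def morph_comp_def th0_def th1_def)
lemma theta_F: "x \<in> DF \<Longrightarrow> fmap theta (chiF x) = cF x"
  using theta(2,3) by (auto simp: DF_def chiF_def morph_eq_on_def morph_comp_def th0_def th1_def)
lemma theta_L: "x \<in> DL \<Longrightarrow> lmap theta (chiL x) = cL x"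
  using theta(2,3) by (auto simp: DL_def chiL_def morph_eq_on_def morph_comp_def th0_def th1_def)

lemma kerS: "x \<in> DS \<Longrightarrow> y \<in> DS \<Longrightarrow> chiS x = chiS y \<Longrightarrow> dS x = dS y"
proof -
  assume a: "x \<in> DS" "y \<in> DS" "chiS x = chiS y"
  hence "cS x = cS y" using theta_S by metis
  hence "y \<in> cS x" using cS_ne[OF a(2)] by simp
  thus ?thesis by (simp add: cS_def)
qed
lemma kerF: "x \<in> DF \<Longrightarrow> y \<in> DF \<Longrightarrow> chiF x = chiF y \<Longrightarrow> opD x = opD y"
proof -
  assume a: "x \<in> DF" "y \<in> DF" "chiF x = chiF y"
  hence "cF x = cF y" using theta_F by metis
  hence "y \<in> cF x" using cF_ne[OF a(2)] by simp
  thus ?thesis by (simp add: cF_def)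
qed
lemma kerL: "x \<in> DL \<Longrightarrow> y \<in> DL \<Longrightarrow> chiL x = chiL y \<Longrightarrow> lrD x = lrD y"
proof -
  assume a: "x \<in> DL" "y \<in> DL" "chiL x = chiL y"
  hence "cL x = cL y" using theta_L by metis
  hence "y \<in> cL x" using cL_ne[OF a(2)] by simp
  thus ?thesis by (simp add: cL_def)
qed

lemma PS_arity_ne: "c \<noteq> {} \<Longrightarrow> arity (PS J a) c = arity (PS J' a') c"
  by (simp add: PS_def)

lemma surjF: "f' \<in> ops Sg' \<Longrightarrow> \<exists>x\<in>DF. chiF x = f'"
proof (rule ccontr)
  assume f': "f' \<in> ops Sg'" and nf: "\<not> (\<exists>x\<in>DF. chiF x = f')"
  define a where "a = (map (smap theta) (fst (arity Sg' f')), smap theta (snd (arity Sg' f')))"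
  have tm: "\<And>s. s \<in> sorts Sg' \<Longrightarrow> smap theta s \<in> cS ` DS"
    using theta(1) unfolding is_morph_def by (simp add: PS_def)
  have aok: "set (fst a) \<subseteq> cS ` DS \<and> snd a \<in> cS ` DS"
    using tm arS'(1,2)[OF f'] by (auto simp: a_def)
  let ?P1 = "PS True a"
  have wf1: "wf_sig ?P1" using wf_PS aok by blast
  have tF: "\<And>g. g \<in> ops Sg' \<Longrightarrow> fmap theta g \<in> cF ` DF \<and>
     arity P0 (fmap theta g) = (map (smap theta) (fst (arity Sg' g)), smap theta (snd (arity Sg' g)))"
    using theta(1) unfolding is_morph_def by (simp add: PS_def)
  have tFne: "\<And>g. g \<in> ops Sg' \<Longrightarrow> fmap theta g \<noteq> {}"
    using tF cF_ne by blast
  have same: "sorts ?P1 = sorts P0" "labels ?P1 = labels P0" "lsort ?P1 = lsort P0"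
    "cF ` DF \<subseteq> ops ?P1" "{} \<in> ops ?P1" "arity ?P1 {} = a" by (auto simp: PS_def)
  have tS: "\<forall>s\<in>sorts Sg'. smap theta s \<in> sorts P0"
    and tL: "\<forall>l\<in>labels Sg'. lmap theta l \<in> labels P0 \<and> lsort P0 (lmap theta l) = smap theta (lsort Sg' l)"
    using theta(1) unfolding is_morph_def by blast+
  have tA: "\<And>g. g \<in> ops Sg' \<Longrightarrow> arity ?P1 (fmap theta g) = (map (smap theta) (fst (arity Sg' g)), smap theta (snd (arity Sg' g)))"
    using tF tFne PS_arity_ne by metis
  have m1: "is_morph Sg' ?P1 theta"
    unfolding is_morph_def using wf(4) wf1 same tS tL tF tA by auto
  define theta' where "theta' = theta\<lparr>fmap := (fmap theta)(f' := {})\<rparr>"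
  have m2: "is_morph Sg' ?P1 theta'"
    unfolding is_morph_def using wf(4) wf1 same tS tL tF tA
    by (auto simp: theta'_def a_def)
  have med1: "morph_eq_on Sg0 (morph_comp theta' chi0') th0" "morph_eq_on Sg1 (morph_comp theta' chi1') th1"
  proof -
    have n0: "\<forall>f\<in>ops Sg0. fmap chi0' f \<noteq> f'" "\<forall>f\<in>ops Sg1. fmap chi1' f \<noteq> f'"
      using nf unfolding DF_def chiF_def by (metis UnI1 image_eqI sum.simps(5), metis UnI2 image_eqI sum.simps(6))
    show "morph_eq_on Sg0 (morph_comp theta' chi0') th0" "morph_eq_on Sg1 (morph_comp theta' chi1') th1"
      using theta(2,3) n0 by (auto simp: morph_eq_on_def morph_comp_def theta'_def)
  qed
  obtain psi where psi: "\<forall>th'. is_morph Sg' ?P1 th' \<and>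
                     morph_eq_on Sg0 (morph_comp th' chi0') th0 \<and>
                     morph_eq_on Sg1 (morph_comp th' chi1') th1 \<longrightarrow>
                     morph_eq_on Sg' psi th'"
  proof -
    have mt0: "is_morph Sg0 ?P1 th0" by (rule morph_th0) (use aok in simp)
    have mt1: "is_morph Sg1 ?P1 th1" by (rule morph_th1) (use aok in simp)
    have "\<exists>th. is_morph Sg' ?P1 th \<and>
              morph_eq_on Sg0 (morph_comp th chi0') th0 \<and>
              morph_eq_on Sg1 (morph_comp th chi1') th1 \<and>
              (\<forall>th'. is_morph Sg' ?P1 th' \<and>
                     morph_eq_on Sg0 (morph_comp th' chi0') th0 \<and>
                     morph_eq_on Sg1 (morph_comp th' chi1') th1 \<longrightarrow>
                     morph_eq_on Sg' th th')" by (rule univ[OF mt0 mt1 comm])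
    then obtain psi0 where "is_morph Sg' ?P1 psi0 \<and>
              morph_eq_on Sg0 (morph_comp psi0 chi0') th0 \<and>
              morph_eq_on Sg1 (morph_comp psi0 chi1') th1 \<and>
              (\<forall>th'. is_morph Sg' ?P1 th' \<and>
                     morph_eq_on Sg0 (morph_comp th' chi0') th0 \<and>
                     morph_eq_on Sg1 (morph_comp th' chi1') th1 \<longrightarrow>
                     morph_eq_on Sg' psi0 th')" by (rule exE)
    then show ?thesis by (intro that) (elim conjE)
  qed
  have "morph_eq_on Sg' psi theta" using psi m1 theta(2,3) by blast
  moreover have "morph_eq_on Sg' psi theta'" using psi m2 med1 by blast
  ultimately have "fmap theta f' = fmap theta' f'" using f' unfolding morph_eq_on_def by simp
  moreover have "fmap theta' f' = {}" by (simp add: theta'_def)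
  ultimately have "fmap theta f' = {}" by simp
  thus False using tFne[OF f'] by simp
qed


section \<open>The amalgamated model\<close>

definition wS where "wS s' = (SOME x. x \<in> DS \<and> chiS x = s')"
definition wF where "wF f' = (SOME x. x \<in> DF \<and> chiF x = f')"
definition wL where "wL l' = (SOME x. x \<in> DL \<and> chiL x = l')"

definition Ap :: "('s2, 'f2, 'l2, 'u) model" where
  "Ap = \<lparr>car = (\<lambda>s'. if \<exists>x\<in>DS. chiS x = s' then carD (wS s') else {}),
         opi = (\<lambda>f'. if \<exists>x\<in>DF. chiF x = f' then opD (wF f') else (\<lambda>xs. undefined)),
         lrel = (\<lambda>l'. if \<exists>x\<in>DL. chiL x = l' then lrD (wL l') else {}),
         rels = (\<lambda>s'. if \<exists>x\<in>DS. chiS x = s' then relsD (wS s') else if s' \<in> sorts Sg' then {{}} else {}),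
         kstar = (\<lambda>s'. if \<exists>x\<in>DS. chiS x = s' then kstarD (wS s')
                   else if s' \<in> sorts Sg' then (\<lambda>r. if r = {} then {} else undefined) else (\<lambda>r. undefined))\<rparr>"

lemma wS: "x \<in> DS \<Longrightarrow> dS (wS (chiS x)) = dS x"
proof -
  assume x: "x \<in> DS"
  have "wS (chiS x) \<in> DS \<and> chiS (wS (chiS x)) = chiS x"
    unfolding wS_def by (rule someI[of _ x]) (simp add: x)
  thus ?thesis using kerS x by blast
qed
lemma wF: "x \<in> DF \<Longrightarrow> opD (wF (chiF x)) = opD x"
proof -
  assume x: "x \<in> DF"
  have "wF (chiF x) \<in> DF \<and> chiF (wF (chiF x)) = chiF x"
    unfolding wF_def by (rule someI[of _ x]) (simp add: x)
  thus ?thesis using kerF x by blast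
qed
lemma wL: "x \<in> DL \<Longrightarrow> lrD (wL (chiL x)) = lrD x"
proof -
  assume x: "x \<in> DL"
  have "wL (chiL x) \<in> DL \<and> chiL (wL (chiL x)) = chiL x"
    unfolding wL_def by (rule someI[of _ x]) (simp add: x)
  thus ?thesis using kerL x by blast
qed

lemma Ap_S: "x \<in> DS \<Longrightarrow> car Ap (chiS x) = carD x \<and> rels Ap (chiS x) = relsD x \<and> kstar Ap (chiS x) = kstarD x"
proof -
  assume x: "x \<in> DS"
  have "\<exists>y\<in>DS. chiS y = chiS x" using x by blast
  thus ?thesis using wS[OF x] by (simp add: Ap_def dS_def)
qed
lemma Ap_F: "x \<in> DF \<Longrightarrow> opi Ap (chiF x) = opD x"
proof -
  assume x: "x \<in> DF"
  have "\<exists>y\<in>DF. chiF y = chiF x" using x by blast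
  thus ?thesis using wF[OF x] by (simp add: Ap_def)
qed
lemma Ap_L: "x \<in> DL \<Longrightarrow> lrel Ap (chiL x) = lrD x"
proof -
  assume x: "x \<in> DL"
  have "\<exists>y\<in>DL. chiL y = chiL x" using x by blast
  thus ?thesis using wL[OF x] by (simp add: Ap_def)
qed

lemma Ap0: "s \<in> sorts Sg0 \<Longrightarrow> car Ap (smap chi0' s) = car A0 s \<and> rels Ap (smap chi0' s) = rels A0 s \<and> kstar Ap (smap chi0' s) = kstar A0 s"
  using Ap_S[of "Inl s"] by (simp add: DS_def chiS_def carD_def relsD_def kstarD_def)
lemma Ap1: "s \<in> sorts Sg1 \<Longrightarrow> car Ap (smap chi1' s) = car A1 s \<and> rels Ap (smap chi1' s) = rels A1 s \<and> kstar Ap (smap chi1' s) = kstar A1 s"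
  using Ap_S[of "Inr s"] by (simp add: DS_def chiS_def carD_def relsD_def kstarD_def)
lemma ApF0: "f \<in> ops Sg0 \<Longrightarrow> opi Ap (fmap chi0' f) = opi A0 f"
  using Ap_F[of "Inl f"] by (simp add: DF_def chiF_def opD_def)
lemma ApF1: "f \<in> ops Sg1 \<Longrightarrow> opi Ap (fmap chi1' f) = opi A1 f"
  using Ap_F[of "Inr f"] by (simp add: DF_def chiF_def opD_def)
lemma ApL0: "l \<in> labels Sg0 \<Longrightarrow> lrel Ap (lmap chi0' l) = lrel A0 l"
  using Ap_L[of "Inl l"] by (simp add: DL_def chiL_def lrD_def)
lemma ApL1: "l \<in> labels Sg1 \<Longrightarrow> lrel Ap (lmap chi1' l) = lrel A1 l"
  using Ap_L[of "Inr l"] by (simp add: DL_def chiL_def lrD_def)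

lemma la0: "f \<in> ops Sg0 \<Longrightarrow> list_all2 (\<lambda>v s. v \<in> car Ap s) xs (fst (arity Sg' (fmap chi0' f)))
   = list_all2 (\<lambda>v s. v \<in> car A0 s) xs (fst (arity Sg0 f))"
  by (simp add: mor0'(3) list_all2_map2, rule list_all2_cong_set) (use Ap0 arS0 in auto)
lemma la1: "f \<in> ops Sg1 \<Longrightarrow> list_all2 (\<lambda>v s. v \<in> car Ap s) xs (fst (arity Sg' (fmap chi1' f)))
   = list_all2 (\<lambda>v s. v \<in> car A1 s) xs (fst (arity Sg1 f))"
  by (simp add: mor1'(3) list_all2_map2, rule list_all2_cong_set) (use Ap1 arS1 in auto)
lemma res0: "f \<in> ops Sg0 \<Longrightarrow> car Ap (snd (arity Sg' (fmap chi0' f))) = car A0 (snd (arity Sg0 f))"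
  using Ap0 arS0 by (simp add: mor0'(3))
lemma res1: "f \<in> ops Sg1 \<Longrightarrow> car Ap (snd (arity Sg' (fmap chi1' f))) = car A1 (snd (arity Sg1 f))"
  using Ap1 arS1 by (simp add: mor1'(3))

lemma red0: "reduct Sg0 chi0' Ap = A0"
proof -
  have m1': "\<And>s. s \<notin> sorts Sg0 \<Longrightarrow> car A0 s = {} \<and> rels A0 s = {} \<and> kstar A0 s = (\<lambda>r. undefined)"
    and m2': "\<And>f xs. \<not> (f \<in> ops Sg0 \<and> list_all2 (\<lambda>x s. x \<in> car A0 s) xs (fst (arity Sg0 f))) \<Longrightarrow> opi A0 f xs = undefined"
    and m3': "\<And>l. l \<notin> labels Sg0 \<Longrightarrow> lrel A0 l = {}"
    and m4': "\<And>s r. s \<in> sorts Sg0 \<Longrightarrow> r \<notin> rels A0 s \<Longrightarrow> kstar A0 s r = undefined"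
  proof -
    have a: "\<forall>s. s \<notin> sorts Sg0 \<longrightarrow> car A0 s = {} \<and> rels A0 s = {} \<and> kstar A0 s = (\<lambda>r. undefined)"
      using m0 unfolding is_model_def by (elim conjE) assumption
    have b: "\<forall>f xs. \<not> (f \<in> ops Sg0 \<and> list_all2 (\<lambda>x s. x \<in> car A0 s) xs (fst (arity Sg0 f))) \<longrightarrow> opi A0 f xs = undefined"
      using m0 unfolding is_model_def by (elim conjE) assumption
    have c: "\<forall>l. l \<notin> labels Sg0 \<longrightarrow> lrel A0 l = {}"
      using m0 unfolding is_model_def by (elim conjE) assumption
    have d: "\<forall>s\<in>sorts Sg0. \<forall>r. r \<notin> rels A0 s \<longrightarrow> kstar A0 s r = undefined"
      using m0 unfolding is_model_def by blast
    show "\<And>s. s \<notin> sorts Sg0 \<Longrightarrow> car A0 s = {} \<and> rels A0 s = {} \<and> kstar A0 s = (\<lambda>r. undefined)"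
      "\<And>f xs. \<not> (f \<in> ops Sg0 \<and> list_all2 (\<lambda>x s. x \<in> car A0 s) xs (fst (arity Sg0 f))) \<Longrightarrow> opi A0 f xs = undefined"
      "\<And>l. l \<notin> labels Sg0 \<Longrightarrow> lrel A0 l = {}"
      "\<And>s r. s \<in> sorts Sg0 \<Longrightarrow> r \<notin> rels A0 s \<Longrightarrow> kstar A0 s r = undefined"
      using a b c d by blast+
  qed
  have la: "\<And>f xs. f \<in> ops Sg0 \<Longrightarrow> list_all2 (\<lambda>x s. x \<in> car Ap (smap chi0' s)) xs (fst (arity Sg0 f))
     = list_all2 (\<lambda>x s. x \<in> car A0 s) xs (fst (arity Sg0 f))"
    by (rule list_all2_cong_set) (use Ap0 arS0 in auto)
  have c: "car (reduct Sg0 chi0' Ap) = car A0"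
  proof
    fix s show "car (reduct Sg0 chi0' Ap) s = car A0 s"
      by (cases "s \<in> sorts Sg0") (simp_all add: reduct_def Ap0 m1')
  qed
  have r: "rels (reduct Sg0 chi0' Ap) = rels A0"
  proof
    fix s show "rels (reduct Sg0 chi0' Ap) s = rels A0 s"
      by (cases "s \<in> sorts Sg0") (simp_all add: reduct_def Ap0 m1')
  qed
  have k: "kstar (reduct Sg0 chi0' Ap) = kstar A0"
  proof (intro ext)
    fix s r show "kstar (reduct Sg0 chi0' Ap) s r = kstar A0 s r"
    proof (cases "s \<in> sorts Sg0")
      case True
      then show ?thesis by (cases "r \<in> rels A0 s") (simp_all add: reduct_def Ap0 m4')
    next
      case False
      then show ?thesis by (simp add: reduct_def m1')
    qed
  qed
  have l: "lrel (reduct Sg0 chi0' Ap) = lrel A0"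
  proof
    fix l show "lrel (reduct Sg0 chi0' Ap) l = lrel A0 l"
      by (cases "l \<in> labels Sg0") (simp_all add: reduct_def ApL0 m3')
  qed
  have o: "opi (reduct Sg0 chi0' Ap) = opi A0"
  proof (intro ext)
    fix f xs show "opi (reduct Sg0 chi0' Ap) f xs = opi A0 f xs"
    proof (cases "f \<in> ops Sg0 \<and> list_all2 (\<lambda>x s. x \<in> car A0 s) xs (fst (arity Sg0 f))")
      case True
      then show ?thesis using la[of f xs] ApF0[of f] by (simp add: reduct_def)
    next
      case False
      then have "\<not> (f \<in> ops Sg0 \<and> list_all2 (\<lambda>x s. x \<in> car Ap (smap chi0' s)) xs (fst (arity Sg0 f)))"
        using la by blast
      then show ?thesis using m2'[OF False] by (auto simp: reduct_def)
    qed
  qed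
  show ?thesis using c r k l o by (simp add: reduct_def)
qed

lemma red1: "reduct Sg1 chi1' Ap = A1"
proof -
  have m1': "\<And>s. s \<notin> sorts Sg1 \<Longrightarrow> car A1 s = {} \<and> rels A1 s = {} \<and> kstar A1 s = (\<lambda>r. undefined)"
    and m2': "\<And>f xs. \<not> (f \<in> ops Sg1 \<and> list_all2 (\<lambda>x s. x \<in> car A1 s) xs (fst (arity Sg1 f))) \<Longrightarrow> opi A1 f xs = undefined"
    and m3': "\<And>l. l \<notin> labels Sg1 \<Longrightarrow> lrel A1 l = {}"
    and m4': "\<And>s r. s \<in> sorts Sg1 \<Longrightarrow> r \<notin> rels A1 s \<Longrightarrow> kstar A1 s r = undefined"
  proof -
    have a: "\<forall>s. s \<notin> sorts Sg1 \<longrightarrow> car A1 s = {} \<and> rels A1 s = {} \<and> kstar A1 s = (\<lambda>r. undefined)"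
      using m1 unfolding is_model_def by (elim conjE) assumption
    have b: "\<forall>f xs. \<not> (f \<in> ops Sg1 \<and> list_all2 (\<lambda>x s. x \<in> car A1 s) xs (fst (arity Sg1 f))) \<longrightarrow> opi A1 f xs = undefined"
      using m1 unfolding is_model_def by (elim conjE) assumption
    have c: "\<forall>l. l \<notin> labels Sg1 \<longrightarrow> lrel A1 l = {}"
      using m1 unfolding is_model_def by (elim conjE) assumption
    have d: "\<forall>s\<in>sorts Sg1. \<forall>r. r \<notin> rels A1 s \<longrightarrow> kstar A1 s r = undefined"
      using m1 unfolding is_model_def by blast
    show "\<And>s. s \<notin> sorts Sg1 \<Longrightarrow> car A1 s = {} \<and> rels A1 s = {} \<and> kstar A1 s = (\<lambda>r. undefined)"
      "\<And>f xs. \<not> (f \<in> ops Sg1 \<and> list_all2 (\<lambda>x s. x \<in> car A1 s) xs (fst (arity Sg1 f))) \<Longrightarrow> opi A1 f xs = undefined"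
      "\<And>l. l \<notin> labels Sg1 \<Longrightarrow> lrel A1 l = {}"
      "\<And>s r. s \<in> sorts Sg1 \<Longrightarrow> r \<notin> rels A1 s \<Longrightarrow> kstar A1 s r = undefined"
      using a b c d by blast+
  qed
  have la: "\<And>f xs. f \<in> ops Sg1 \<Longrightarrow> list_all2 (\<lambda>x s. x \<in> car Ap (smap chi1' s)) xs (fst (arity Sg1 f))
     = list_all2 (\<lambda>x s. x \<in> car A1 s) xs (fst (arity Sg1 f))"
    by (rule list_all2_cong_set) (use Ap1 arS1 in auto)
  have c: "car (reduct Sg1 chi1' Ap) = car A1"
  proof
    fix s show "car (reduct Sg1 chi1' Ap) s = car A1 s"
      by (cases "s \<in> sorts Sg1") (simp_all add: reduct_def Ap1 m1')
  qed
  have r: "rels (reduct Sg1 chi1' Ap) = rels A1"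
  proof
    fix s show "rels (reduct Sg1 chi1' Ap) s = rels A1 s"
      by (cases "s \<in> sorts Sg1") (simp_all add: reduct_def Ap1 m1')
  qed
  have k: "kstar (reduct Sg1 chi1' Ap) = kstar A1"
  proof (intro ext)
    fix s r show "kstar (reduct Sg1 chi1' Ap) s r = kstar A1 s r"
    proof (cases "s \<in> sorts Sg1")
      case True
      then show ?thesis by (cases "r \<in> rels A1 s") (simp_all add: reduct_def Ap1 m4')
    next
      case False
      then show ?thesis by (simp add: reduct_def m1')
    qed
  qed
  have l: "lrel (reduct Sg1 chi1' Ap) = lrel A1"
  proof
    fix l show "lrel (reduct Sg1 chi1' Ap) l = lrel A1 l"
      by (cases "l \<in> labels Sg1") (simp_all add: reduct_def ApL1 m3')
  qed
  have o: "opi (reduct Sg1 chi1' Ap) = opi A1"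
  proof (intro ext)
    fix f xs show "opi (reduct Sg1 chi1' Ap) f xs = opi A1 f xs"
    proof (cases "f \<in> ops Sg1 \<and> list_all2 (\<lambda>x s. x \<in> car A1 s) xs (fst (arity Sg1 f))")
      case True
      then show ?thesis using la[of f xs] ApF1[of f] by (simp add: reduct_def)
    next
      case False
      then have "\<not> (f \<in> ops Sg1 \<and> list_all2 (\<lambda>x s. x \<in> car Ap (smap chi1' s)) xs (fst (arity Sg1 f)))"
        using la by blast
      then show ?thesis using m2'[OF False] by (auto simp: reduct_def)
    qed
  qed
  show ?thesis using c r k l o by (simp add: reduct_def)
qed

lemma chiS_in: "x \<in> DS \<Longrightarrow> chiS x \<in> sorts Sg'"
  by (auto simp: DS_def chiS_def mor0' mor1')
lemma chiF_in: "x \<in> DF \<Longrightarrow> chiF x \<in> ops Sg'"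
  by (auto simp: DF_def chiF_def mor0' mor1')
lemma chiL_in: "x \<in> DL \<Longrightarrow> chiL x \<in> labels Sg'"
  by (auto simp: DL_def chiL_def mor0' mor1')

lemma sortok: "x \<in> DS \<Longrightarrow>
        relsD x \<subseteq> Pow (carD x \<times> carD x) \<and>
        {} \<in> relsD x \<and> Id_on (carD x) \<in> relsD x \<and>
        (\<forall>r\<in>relsD x. \<forall>r'\<in>relsD x.
           r \<union> r' \<in> relsD x \<and>
           ((carD x \<times> carD x) - r) \<union> r' \<in> relsD x \<and>
           r O r' \<in> relsD x \<and>
           (converse r) O r' \<in> relsD x) \<and>
        kleene_algebra_on (relsD x) {} (\<union>) (Id_on (carD x)) (O) (kstarD x) \<and>
        (\<forall>r. r \<notin> relsD x \<longrightarrow> kstarD x r = undefined)"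
proof -
  assume "x \<in> DS"
  then consider (a) s where "x = Inl s" "s \<in> sorts Sg0" | (b) s where "x = Inr s" "s \<in> sorts Sg1"
    by (auto simp: DS_def)
  then show ?thesis
  proof cases
    case a
    then show ?thesis using m0 unfolding is_model_def by (simp add: carD_def relsD_def kstarD_def)
  next
    case b
    then show ?thesis using m1 unfolding is_model_def by (simp add: carD_def relsD_def kstarD_def)
  qed
qed

lemma mlab0: "l \<in> labels Sg0 \<Longrightarrow> lrel A0 l \<in> rels A0 (lsort Sg0 l) \<and> lrel A0 l \<subseteq> car A0 (lsort Sg0 l) \<times> car A0 (lsort Sg0 l)"
proof -
  assume l: "l \<in> labels Sg0"
  have a: "\<forall>s\<in>sorts Sg0. \<forall>l\<in>labels Sg0. lsort Sg0 l = s \<longrightarrow> lrel A0 l \<in> rels A0 s"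
    using m0 unfolding is_model_def by blast
  have b: "\<forall>l\<in>labels Sg0. lrel A0 l \<subseteq> car A0 (lsort Sg0 l) \<times> car A0 (lsort Sg0 l)"
    using m0 unfolding is_model_def by (elim conjE) assumption
  show ?thesis using a b l arS0(3)[OF l] by blast
qed
lemma mlab1: "l \<in> labels Sg1 \<Longrightarrow> lrel A1 l \<in> rels A1 (lsort Sg1 l) \<and> lrel A1 l \<subseteq> car A1 (lsort Sg1 l) \<times> car A1 (lsort Sg1 l)"
proof -
  assume l: "l \<in> labels Sg1"
  have a: "\<forall>s\<in>sorts Sg1. \<forall>l\<in>labels Sg1. lsort Sg1 l = s \<longrightarrow> lrel A1 l \<in> rels A1 s"
    using m1 unfolding is_model_def by blast
  have b: "\<forall>l\<in>labels Sg1. lrel A1 l \<subseteq> car A1 (lsort Sg1 l) \<times> car A1 (lsort Sg1 l)"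
    using m1 unfolding is_model_def by (elim conjE) assumption
  show ?thesis using a b l arS1(3)[OF l] by blast
qed

lemma lab_ok: "l \<in> labels Sg' \<Longrightarrow> lrel Ap l \<in> rels Ap (lsort Sg' l) \<and>
    lrel Ap l \<subseteq> car Ap (lsort Sg' l) \<times> car Ap (lsort Sg' l)"
proof -
  assume l: "l \<in> labels Sg'"
  have ne: "{} \<in> rels Ap (lsort Sg' l)"
  proof (cases "\<exists>x\<in>DS. chiS x = lsort Sg' l")
    case True
    then obtain x where "x \<in> DS" "chiS x = lsort Sg' l" by blast
    then show ?thesis using Ap_S sortok by metis
  next
    case False
    then show ?thesis using arS'(3)[OF l] by (simp add: Ap_def)
  qed
  show ?thesis
  proof (cases "\<exists>x\<in>DL. chiL x = l")
    case True
    then obtain y where y: "y \<in> DL" "chiL y = l" by blast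
    then consider (a) l0 where "y = Inl l0" "l0 \<in> labels Sg0" | (b) l1 where "y = Inr l1" "l1 \<in> labels Sg1"
      by (auto simp: DL_def)
    then show ?thesis
    proof cases
      case a
      have ll: "l = lmap chi0' l0" using y a by (simp add: chiL_def)
      hence ls: "lsort Sg' l = smap chi0' (lsort Sg0 l0)" using mor0'(5)[OF a(2)] by simp
      have e1: "lrel Ap l = lrel A0 l0" using ApL0[OF a(2)] ll by simp
      have e2: "car Ap (lsort Sg' l) = car A0 (lsort Sg0 l0) \<and> rels Ap (lsort Sg' l) = rels A0 (lsort Sg0 l0)"
        using Ap0[OF arS0(3)[OF a(2)]] ls by simp
      show ?thesis using e1 e2 mlab0[OF a(2)] by simp
    next
      case b
      have ll: "l = lmap chi1' l1" using y b by (simp add: chiL_def)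
      hence ls: "lsort Sg' l = smap chi1' (lsort Sg1 l1)" using mor1'(5)[OF b(2)] by simp
      have e1: "lrel Ap l = lrel A1 l1" using ApL1[OF b(2)] ll by simp
      have e2: "car Ap (lsort Sg' l) = car A1 (lsort Sg1 l1) \<and> rels Ap (lsort Sg' l) = rels A1 (lsort Sg1 l1)"
        using Ap1[OF arS1(3)[OF b(2)]] ls by simp
      show ?thesis using e1 e2 mlab1[OF b(2)] by simp
    qed
  next
    case False
    then show ?thesis using ne by (simp add: Ap_def)
  qed
qed


lemma mopi0: "\<not> (f \<in> ops Sg0 \<and> list_all2 (\<lambda>x s. x \<in> car A0 s) xs (fst (arity Sg0 f))) \<Longrightarrow> opi A0 f xs = undefined"
  "f \<in> ops Sg0 \<Longrightarrow> list_all2 (\<lambda>x s. x \<in> car A0 s) xs (fst (arity Sg0 f)) \<Longrightarrow> opi A0 f xs \<in> car A0 (snd (arity Sg0 f))"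
proof -
  have b: "\<forall>f xs. \<not> (f \<in> ops Sg0 \<and> list_all2 (\<lambda>x s. x \<in> car A0 s) xs (fst (arity Sg0 f))) \<longrightarrow> opi A0 f xs = undefined"
    using m0 unfolding is_model_def by (elim conjE) assumption
  have c: "\<forall>f\<in>ops Sg0. \<forall>xs. list_all2 (\<lambda>x s. x \<in> car A0 s) xs (fst (arity Sg0 f))
             \<longrightarrow> opi A0 f xs \<in> car A0 (snd (arity Sg0 f))"
    using m0 unfolding is_model_def by (elim conjE) assumption
  show "\<not> (f \<in> ops Sg0 \<and> list_all2 (\<lambda>x s. x \<in> car A0 s) xs (fst (arity Sg0 f))) \<Longrightarrow> opi A0 f xs = undefined"
    using b by blast
  show "f \<in> ops Sg0 \<Longrightarrow> list_all2 (\<lambda>x s. x \<in> car A0 s) xs (fst (arity Sg0 f)) \<Longrightarrow> opi A0 f xs \<in> car A0 (snd (arity Sg0 f))"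
    using c by blast
qed
lemma mopi1: "\<not> (f \<in> ops Sg1 \<and> list_all2 (\<lambda>x s. x \<in> car A1 s) xs (fst (arity Sg1 f))) \<Longrightarrow> opi A1 f xs = undefined"
  "f \<in> ops Sg1 \<Longrightarrow> list_all2 (\<lambda>x s. x \<in> car A1 s) xs (fst (arity Sg1 f)) \<Longrightarrow> opi A1 f xs \<in> car A1 (snd (arity Sg1 f))"
proof -
  have b: "\<forall>f xs. \<not> (f \<in> ops Sg1 \<and> list_all2 (\<lambda>x s. x \<in> car A1 s) xs (fst (arity Sg1 f))) \<longrightarrow> opi A1 f xs = undefined"
    using m1 unfolding is_model_def by (elim conjE) assumption
  have c: "\<forall>f\<in>ops Sg1. \<forall>xs. list_all2 (\<lambda>x s. x \<in> car A1 s) xs (fst (arity Sg1 f))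
             \<longrightarrow> opi A1 f xs \<in> car A1 (snd (arity Sg1 f))"
    using m1 unfolding is_model_def by (elim conjE) assumption
  show "\<not> (f \<in> ops Sg1 \<and> list_all2 (\<lambda>x s. x \<in> car A1 s) xs (fst (arity Sg1 f))) \<Longrightarrow> opi A1 f xs = undefined"
    using b by blast
  show "f \<in> ops Sg1 \<Longrightarrow> list_all2 (\<lambda>x s. x \<in> car A1 s) xs (fst (arity Sg1 f)) \<Longrightarrow> opi A1 f xs \<in> car A1 (snd (arity Sg1 f))"
    using c by blast
qed

lemma opi_out: "\<not> (f \<in> ops Sg' \<and> list_all2 (\<lambda>x s. x \<in> car Ap s) xs (fst (arity Sg' f))) \<Longrightarrow> opi Ap f xs = undefined"
proof -
  assume H: "\<not> (f \<in> ops Sg' \<and> list_all2 (\<lambda>x s. x \<in> car Ap s) xs (fst (arity Sg' f)))"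
  show ?thesis
  proof (cases "\<exists>x\<in>DF. chiF x = f")
    case True
    then obtain y where y: "y \<in> DF" "chiF y = f" by blast
    then consider (a) f0 where "y = Inl f0" "f0 \<in> ops Sg0" | (b) f1 where "y = Inr f1" "f1 \<in> ops Sg1"
      by (auto simp: DF_def)
    then show ?thesis
    proof cases
      case a
      have ff: "f = fmap chi0' f0" using y a by (simp add: chiF_def)
      have "\<not> list_all2 (\<lambda>x s. x \<in> car A0 s) xs (fst (arity Sg0 f0))"
        using H ff la0[OF a(2)] mor0'(2)[OF a(2)] by simp
      then show ?thesis using ff ApF0[OF a(2)] mopi0(1) by simp
    next
      case b
      have ff: "f = fmap chi1' f1" using y b by (simp add: chiF_def)
      have "\<not> list_all2 (\<lambda>x s. x \<in> car A1 s) xs (fst (arity Sg1 f1))"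
        using H ff la1[OF b(2)] mor1'(2)[OF b(2)] by simp
      then show ?thesis using ff ApF1[OF b(2)] mopi1(1) by simp
    qed
  next
    case False
    then show ?thesis by (simp add: Ap_def)
  qed
qed

lemma opi_in: "f \<in> ops Sg' \<Longrightarrow> list_all2 (\<lambda>x s. x \<in> car Ap s) xs (fst (arity Sg' f)) \<Longrightarrow> opi Ap f xs \<in> car Ap (snd (arity Sg' f))"
proof -
  assume f: "f \<in> ops Sg'" and H: "list_all2 (\<lambda>x s. x \<in> car Ap s) xs (fst (arity Sg' f))"
  obtain y where y: "y \<in> DF" "chiF y = f" using surjF[OF f] by blast
  then consider (a) f0 where "y = Inl f0" "f0 \<in> ops Sg0" | (b) f1 where "y = Inr f1" "f1 \<in> ops Sg1"
    by (auto simp: DF_def)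
  then show ?thesis
  proof cases
    case a
    have ff: "f = fmap chi0' f0" using y a by (simp add: chiF_def)
    have "list_all2 (\<lambda>x s. x \<in> car A0 s) xs (fst (arity Sg0 f0))"
      using H ff la0[OF a(2)] by simp
    then show ?thesis using ff ApF0[OF a(2)] mopi0(2)[OF a(2)] res0[OF a(2)] by simp
  next
    case b
    have ff: "f = fmap chi1' f1" using y b by (simp add: chiF_def)
    have "list_all2 (\<lambda>x s. x \<in> car A1 s) xs (fst (arity Sg1 f1))"
      using H ff la1[OF b(2)] by simp
    then show ?thesis using ff ApF1[OF b(2)] mopi1(2)[OF b(2)] res1[OF b(2)] by simp
  qed
qed

lemma sort_out: "s \<notin> sorts Sg' \<Longrightarrow> car Ap s = {} \<and> rels Ap s = {} \<and> kstar Ap s = (\<lambda>r. undefined)"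
proof -
  assume s: "s \<notin> sorts Sg'"
  hence "\<not> (\<exists>x\<in>DS. chiS x = s)" using chiS_in by blast
  thus ?thesis using s by (simp add: Ap_def)
qed

lemma lab_out: "l \<notin> labels Sg' \<Longrightarrow> lrel Ap l = {}"
proof -
  assume s: "l \<notin> labels Sg'"
  hence "\<not> (\<exists>x\<in>DL. chiL x = l)" using chiL_in by blast
  thus ?thesis by (simp add: Ap_def)
qed

lemma sort_in: "s \<in> sorts Sg' \<Longrightarrow>
        rels Ap s \<subseteq> Pow (car Ap s \<times> car Ap s) \<and>
        {} \<in> rels Ap s \<and> Id_on (car Ap s) \<in> rels Ap s \<and>
        (\<forall>l\<in>labels Sg'. lsort Sg' l = s \<longrightarrow> lrel Ap l \<in> rels Ap s) \<and>
        (\<forall>r\<in>rels Ap s. \<forall>r'\<in>rels Ap s.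
           r \<union> r' \<in> rels Ap s \<and>
           ((car Ap s \<times> car Ap s) - r) \<union> r' \<in> rels Ap s \<and>
           r O r' \<in> rels Ap s \<and>
           (converse r) O r' \<in> rels Ap s) \<and>
        kleene_algebra_on (rels Ap s) {} (\<union>) (Id_on (car Ap s)) (O) (kstar Ap s) \<and>
        (\<forall>r. r \<notin> rels Ap s \<longrightarrow> kstar Ap s r = undefined)"
proof -
  assume s: "s \<in> sorts Sg'"
  have L: "\<forall>l\<in>labels Sg'. lsort Sg' l = s \<longrightarrow> lrel Ap l \<in> rels Ap s"
    using lab_ok by blast
  show ?thesis
  proof (cases "\<exists>x\<in>DS. chiS x = s")
    case True
    then obtain x where x: "x \<in> DS" "chiS x = s" by blast
    have e: "car Ap s = carD x" "rels Ap s = relsD x" "kstar Ap s = kstarD x"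
      using Ap_S[OF x(1)] x(2) by auto
    show ?thesis unfolding e using sortok[OF x(1)] L[unfolded e] by blast
  next
    case False
    have e: "car Ap s = {}" "rels Ap s = {{}}" "kstar Ap s = (\<lambda>r. if r = {} then {} else undefined)"
      using False s by (simp_all add: Ap_def)
    have k: "kleene_algebra_on {{}} {} (\<union>) (Id_on {}) (O) (\<lambda>r. if r = {} then {} else undefined)"
      by (simp add: kleene_algebra_on_def)
    show ?thesis using L k unfolding e by auto
  qed
qed

lemma Ap_model: "is_model Sg' Ap"
  unfolding is_model_def
proof (intro conjI)
  show "wf_sig Sg'" by (rule wf(4))
  show "\<forall>s. s \<notin> sorts Sg' \<longrightarrow> car Ap s = {} \<and> rels Ap s = {} \<and> kstar Ap s = (\<lambda>r. undefined)"
    using sort_out by blast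
  show "\<forall>f xs. \<not> (f \<in> ops Sg' \<and> list_all2 (\<lambda>x s. x \<in> car Ap s) xs (fst (arity Sg' f)))
             \<longrightarrow> opi Ap f xs = undefined" using opi_out by blast
  show "\<forall>f\<in>ops Sg'. \<forall>xs. list_all2 (\<lambda>x s. x \<in> car Ap s) xs (fst (arity Sg' f))
             \<longrightarrow> opi Ap f xs \<in> car Ap (snd (arity Sg' f))" using opi_in by blast
  show "\<forall>l. l \<notin> labels Sg' \<longrightarrow> lrel Ap l = {}" using lab_out by blast
  show "\<forall>l\<in>labels Sg'. lrel Ap l \<subseteq> car Ap (lsort Sg' l) \<times> car Ap (lsort Sg' l)"
    using lab_ok by blast
  show "\<forall>s\<in>sorts Sg'.
        rels Ap s \<subseteq> Pow (car Ap s \<times> car Ap s) \<and>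
        {} \<in> rels Ap s \<and> Id_on (car Ap s) \<in> rels Ap s \<and>
        (\<forall>l\<in>labels Sg'. lsort Sg' l = s \<longrightarrow> lrel Ap l \<in> rels Ap s) \<and>
        (\<forall>r\<in>rels Ap s. \<forall>r'\<in>rels Ap s.
           r \<union> r' \<in> rels Ap s \<and>
           ((car Ap s \<times> car Ap s) - r) \<union> r' \<in> rels Ap s \<and>
           r O r' \<in> rels Ap s \<and>
           (converse r) O r' \<in> rels Ap s) \<and>
        kleene_algebra_on (rels Ap s) {} (\<union>) (Id_on (car Ap s)) (O) (kstar Ap s) \<and>
        (\<forall>r. r \<notin> rels Ap s \<longrightarrow> kstar Ap s r = undefined)"
    using sort_in by blast
qed

lemma amalg: "\<exists>A'. is_model Sg' A' \<and> reduct Sg0 chi0' A' = A0 \<and> reduct Sg1 chi1' A' = A1"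
  using Ap_model red0 red1 by blast

end

theorem lemma29:
  fixes Sg :: "('s, 'f, 'l) sig"
    and Sg0 :: "('s0, 'f0, 'l0) sig" and Sg1 :: "('s1, 'f1, 'l1) sig"
    and Sg' :: "('s2, 'f2, 'l2) sig"
    and chi0 :: "('s, 'f, 'l, 's0, 'f0, 'l0) morph"
    and chi1 :: "('s, 'f, 'l, 's1, 'f1, 'l1) morph"
    and chi0' :: "('s0, 'f0, 'l0, 's2, 'f2, 'l2) morph"
    and chi1' :: "('s1, 'f1, 'l1, 's2, 'f2, 'l2) morph"
    and A0 :: "('s0, 'f0, 'l0, 'u) model"
    and A1 :: "('s1, 'f1, 'l1, 'u) model"
  assumes "is_pushout Sg Sg0 Sg1 Sg' chi0 chi1 chi0' chi1'"
    and "is_model Sg0 A0"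
    and "is_model Sg1 A1"
  shows "reduct Sg chi0 A0 = reduct Sg chi1 A1 \<longleftrightarrow>
         (\<exists>A' :: ('s2, 'f2, 'l2, 'u) model.
            is_model Sg' A' \<and> reduct Sg0 chi0' A' = A0 \<and> reduct Sg1 chi1' A' = A1)"
proof
  assume "reduct Sg chi0 A0 = reduct Sg chi1 A1"
  then interpret po_setup Sg Sg0 Sg1 Sg' chi0 chi1 chi0' chi1' A0 A1
    using assms by unfold_locales
  show "\<exists>A' :: ('s2, 'f2, 'l2, 'u) model.
            is_model Sg' A' \<and> reduct Sg0 chi0' A' = A0 \<and> reduct Sg1 chi1' A' = A1"
    by (rule amalg)
next
  assume "\<exists>A' :: ('s2, 'f2, 'l2, 'u) model.
            is_model Sg' A' \<and> reduct Sg0 chi0' A' = A0 \<and> reduct Sg1 chi1' A' = A1"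
  then obtain A' :: "('s2, 'f2, 'l2, 'u) model" where
    A': "reduct Sg0 chi0' A' = A0" "reduct Sg1 chi1' A' = A1" by blast
  have mo: "is_morph Sg Sg0 chi0" "is_morph Sg Sg1 chi1" "is_morph Sg0 Sg' chi0'" "is_morph Sg1 Sg' chi1'"
    and ce: "morph_eq_on Sg (morph_comp chi0' chi0) (morph_comp chi1' chi1)"
    using assms(1) by (auto simp: is_pushout_def)
  have wfs: "wf_sig Sg" using mo(1) by (simp add: is_morph_def)
  have "reduct Sg chi0 A0 = reduct Sg (morph_comp chi0' chi0) A'"
    using reduct_comp[OF mo(1,3), of A'] unfolding A'(1) .
  also have "\<dots> = reduct Sg (morph_comp chi1' chi1) A'" by (rule reduct_cong[OF ce wfs])
  also have "\<dots> = reduct Sg chi1 A1"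
    using reduct_comp[OF mo(2,4), of A'] unfolding A'(2) by (rule sym)
  finally show "reduct Sg chi0 A0 = reduct Sg chi1 A1" .
qed

end
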